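(* Each of $\mathtt{CA}$, $\mathtt{SUR}$ and $\mathtt{REV}$, with the topology induced by the metric $\delta$, is a perfect space, i.e. has no isolated points.
   Context: $\Sigma$ is a finite alphabet with $|\Sigma|\ge2$, $N(r)=[-r,r]$. A cellular automaton (CA) is a map $c:\Sigma^\mathbb{Z}\to\Sigma^\mathbb{Z}$ of the form $c(x)_i=F(x_{[i-r,i+r]})$ for a local function $F:\Sigma^{N(r)}\to\Sigma$. $\mathtt{CA}$ is the set of all CA, $\mathtt{SUR}$ the surjective and $\mathtt{REV}$ the injective ones. For $c,d\in\mathtt{CA}$ with common radius $r$, $D^c_d$ is the set of $w\in\Sigma^{N(r)}$ on which the local rules of $c$ and $d$ give different outputs, and $\delta(c,d)=|D^c_d|/|\Sigma|^{2r+1}$ (independent of $r$). *)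

theory Defs
  imports Complex_Main "HOL-Library.FuncSet"
begin

definition nbhd :: "nat \<Rightarrow> int set" where
  "nbhd r = {- int r .. int r}"

definition patterns :: "nat \<Rightarrow> (int \<Rightarrow> 'a) set" where
  "patterns r = PiE (nbhd r) (\<lambda>_. UNIV)"

definition has_local_rule :: "((int \<Rightarrow> 'a) \<Rightarrow> (int \<Rightarrow> 'a)) \<Rightarrow> nat \<Rightarrow> ((int \<Rightarrow> 'a) \<Rightarrow> 'a) \<Rightarrow> bool" where
  "has_local_rule c r F \<longleftrightarrow> (\<forall>x i. c x i = F (restrict (\<lambda>j. x (i + j)) (nbhd r)))"

definition has_radius :: "((int \<Rightarrow> 'a) \<Rightarrow> (int \<Rightarrow> 'a)) \<Rightarrow> nat \<Rightarrow> bool" where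
  "has_radius c r \<longleftrightarrow> (\<exists>F. has_local_rule c r F)"

definition CA :: "((int \<Rightarrow> 'a) \<Rightarrow> (int \<Rightarrow> 'a)) set" where
  "CA = {c. \<exists>r. has_radius c r}"

definition SUR :: "((int \<Rightarrow> 'a) \<Rightarrow> (int \<Rightarrow> 'a)) set" where
  "SUR = {c \<in> CA. surj c}"

definition REV :: "((int \<Rightarrow> 'a) \<Rightarrow> (int \<Rightarrow> 'a)) set" where
  "REV = {c \<in> CA. inj c}"

text \<open>Local-rule output of c on a pattern w in Sigma^N(r) (for c of radius r):
 evaluate c at cell 0 of any configuration extending w; we use w itself.\<close>

definition disagree :: "((int \<Rightarrow> 'a) \<Rightarrow> (int \<Rightarrow> 'a)) \<Rightarrow> ((int \<Rightarrow> 'a) \<Rightarrow> (int \<Rightarrow> 'a)) \<Rightarrow> nat \<Rightarrow> (int \<Rightarrow> 'a) set" where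
  "disagree c d r = {w \<in> patterns r. c w 0 \<noteq> d w 0}"

definition common_radius :: "((int \<Rightarrow> 'a) \<Rightarrow> (int \<Rightarrow> 'a)) \<Rightarrow> ((int \<Rightarrow> 'a) \<Rightarrow> (int \<Rightarrow> 'a)) \<Rightarrow> nat" where
  "common_radius c d = (LEAST r. has_radius c r \<and> has_radius d r)"

definition delta :: "((int \<Rightarrow> 'a::finite) \<Rightarrow> (int \<Rightarrow> 'a)) \<Rightarrow> ((int \<Rightarrow> 'a) \<Rightarrow> (int \<Rightarrow> 'a)) \<Rightarrow> real" where
  "delta c d = (let r = common_radius c d in
     real (card (disagree c d r)) / real (card (UNIV :: 'a set)) ^ (2 * r + 1))"

definition perfect_delta :: "((int \<Rightarrow> 'a::finite) \<Rightarrow> (int \<Rightarrow> 'a)) set \<Rightarrow> bool" where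
  "perfect_delta X \<longleftrightarrow> (\<forall>c\<in>X. \<forall>\<epsilon>>0. \<exists>d\<in>X. d \<noteq> c \<and> delta c d < \<epsilon>)"

end

theory Submission
  imports Defs
begin

definition loc :: "((int \<Rightarrow> 'a) \<Rightarrow> (int \<Rightarrow> 'a)) \<Rightarrow> nat \<Rightarrow> bool" where
  "loc c r \<longleftrightarrow> (\<forall>x i. c x i = c (\<lambda>j. x (i+j)) 0) \<and>
      (\<forall>x x'. (\<forall>j\<in>nbhd r. x j = x' j) \<longrightarrow> c x 0 = c x' 0)"

lemma loc_local: "loc c r \<Longrightarrow> (\<And>j. j \<in> nbhd r \<Longrightarrow> x j = x' j) \<Longrightarrow> c x 0 = c x' 0"
  unfolding loc_def by blast

lemma loc_shift: "loc c r \<Longrightarrow> c x i = c (\<lambda>j. x (i+j)) 0"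
  unfolding loc_def by blast

lemma radius_loc: "has_radius c r \<longleftrightarrow> loc c r"
proof
  assume "has_radius c r"
  then obtain F where F: "has_local_rule c r F" unfolding has_radius_def by blast
  show "loc c r" unfolding loc_def
  proof (intro conjI allI impI)
    fix x i show "c x i = c (\<lambda>j. x (i+j)) 0" using F unfolding has_local_rule_def by simp
  next
    fix x x' :: "int \<Rightarrow> 'a" assume "\<forall>j\<in>nbhd r. x j = x' j"
    then have "restrict (\<lambda>j. x (0 + j)) (nbhd r) = restrict (\<lambda>j. x' (0 + j)) (nbhd r)"
      by (intro restrict_ext) auto
    then show "c x 0 = c x' 0" using F unfolding has_local_rule_def by metis
  qed
next
  assume L: "loc c r"
  have "has_local_rule c r (\<lambda>w. c w 0)" unfolding has_local_rule_def
  proof (intro allI)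
    fix x i
    have "c x i = c (\<lambda>j. x (i+j)) 0" using L unfolding loc_def by blast
    also have "\<dots> = c (restrict (\<lambda>j. x (i + j)) (nbhd r)) 0"
      using L unfolding loc_def by (metis restrict_apply')
    finally show "c x i = c (restrict (\<lambda>j. x (i + j)) (nbhd r)) 0" .
  qed
  then show "has_radius c r" unfolding has_radius_def by blast
qed

lemma nbhd_mono: "r \<le> r' \<Longrightarrow> nbhd r \<subseteq> nbhd r'"
  unfolding nbhd_def by auto

lemma loc_mono: "loc c r \<Longrightarrow> r \<le> r' \<Longrightarrow> loc c r'"
  unfolding loc_def using nbhd_mono by blast

lemma loc_comp:
  assumes c: "loc c r1" and g: "loc g r2"
  shows "loc (c \<circ> g) (r1 + r2)"
  unfolding loc_def
proof (intro conjI allI impI)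
  fix x i
  have "c (g x) i = c (\<lambda>j. g x (i+j)) 0" using c unfolding loc_def by blast
  also have "(\<lambda>j. g x (i+j)) = (\<lambda>j. g (\<lambda>j. x (i + j)) j)"
  proof
    fix j
    have "g x (i+j) = g (\<lambda>l. x (i+j+l)) 0" using g unfolding loc_def by blast
    moreover have "g (\<lambda>j. x (i + j)) j = g (\<lambda>l. x (i+(j+l))) 0" using g unfolding loc_def by blast
    ultimately show "g x (i+j) = g (\<lambda>j. x (i + j)) j" by (simp add: add.assoc)
  qed
  finally show "(c \<circ> g) x i = (c \<circ> g) (\<lambda>j. x (i + j)) 0" by simp
next
  fix x x' :: "int \<Rightarrow> 'a" assume A: "\<forall>j\<in>nbhd (r1 + r2). x j = x' j"
  have "\<forall>j\<in>nbhd r1. g x j = g x' j"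
  proof
    fix j assume j: "j \<in> nbhd r1"
    have "g x j = g (\<lambda>l. x (j+l)) 0" using g unfolding loc_def by blast
    also have "\<dots> = g (\<lambda>l. x' (j+l)) 0"
    proof -
      have "\<forall>l\<in>nbhd r2. x (j+l) = x' (j+l)" using A j unfolding nbhd_def by auto
      then show ?thesis by (intro loc_local[OF g]) auto
    qed
    also have "\<dots> = g x' j" using g unfolding loc_def by metis
    finally show "g x j = g x' j" .
  qed
  then show "(c \<circ> g) x 0 = (c \<circ> g) x' 0" using c unfolding loc_def by simp
qed

lemma CA_loc: "c \<in> CA \<longleftrightarrow> (\<exists>r. loc c r)"
  unfolding CA_def using radius_loc by blast

lemma common_radius_loc:
  assumes "loc c r1" "loc d r2"
  shows "loc c (common_radius c d) \<and> loc d (common_radius c d) \<and> common_radius c d \<le> max r1 r2"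
proof -
  have ex: "has_radius c (max r1 r2) \<and> has_radius d (max r1 r2)"
    using assms loc_mono radius_loc by (metis max.cobounded1 max.cobounded2)
  show ?thesis unfolding common_radius_def
    using LeastI[of "\<lambda>r. has_radius c r \<and> has_radius d r", OF ex] Least_le[of "\<lambda>r. has_radius c r \<and> has_radius d r", OF ex]
      radius_loc by blast
qed

lemma card_nbhd: "card (nbhd r) = 2*r+1"
  unfolding nbhd_def by simp

lemma finite_nbhd[simp]: "finite (nbhd r)" unfolding nbhd_def by simp



lemma finite_patterns[simp]: "finite (patterns N :: (int \<Rightarrow> 'a::finite) set)"
  unfolding patterns_def by (simp add: finite_PiE)

lemma card_fix:
  fixes f :: "int \<Rightarrow> 'a::finite"
  assumes S: "S \<subseteq> nbhd N"
  shows "card {w \<in> (patterns N :: (int \<Rightarrow> 'a) set). \<forall>k\<in>S. w k = f k} * card (UNIV::'a set) ^ card S \<le> card (UNIV::'a set) ^ (2*N+1)"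
proof -
  let ?A = "{w \<in> (patterns N :: (int \<Rightarrow> 'a) set). \<forall>k\<in>S. w k = f k}"
  let ?B = "PiE (nbhd N - S) (\<lambda>_. UNIV :: 'a set)"
  have inj: "inj_on (\<lambda>w. restrict w (nbhd N - S)) ?A"
  proof (rule inj_onI)
    fix w1 w2 assume w1: "w1 \<in> ?A" and w2: "w2 \<in> ?A" and eq: "restrict w1 (nbhd N - S) = restrict w2 (nbhd N - S)"
    show "w1 = w2"
    proof
      fix k
      show "w1 k = w2 k"
      proof (cases "k \<in> nbhd N")
        case True
        then show ?thesis
        proof (cases "k \<in> S")
          case True then show ?thesis using w1 w2 by auto
        next
          case False
          have "restrict w1 (nbhd N - S) k = restrict w2 (nbhd N - S) k" using eq by simp
          then show ?thesis using False \<open>k \<in> nbhd N\<close> by simp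
        qed
      next
        case False
        have "w1 \<in> PiE (nbhd N) (\<lambda>_. UNIV)" "w2 \<in> PiE (nbhd N) (\<lambda>_. UNIV)"
          using w1 w2 unfolding patterns_def by blast+
        then have "w1 k = undefined" "w2 k = undefined" using False by (auto intro: PiE_arb)
        then show ?thesis by simp
      qed
    qed
  qed
  have img: "(\<lambda>w. restrict w (nbhd N - S)) ` ?A \<subseteq> ?B" by (rule image_subsetI, subst restrict_PiE_iff, simp)
  have "card ?A \<le> card ?B"
    by (rule card_inj_on_le[OF inj img]) (simp add: finite_PiE)
  also have "card ?B = card (UNIV::'a set) ^ card (nbhd N - S)"
    by (simp add: card_PiE)
  also have "card (nbhd N - S) = 2*N+1 - card S"
    using S finite_subset[OF S finite_nbhd] by (simp add: card_Diff_subset card_nbhd)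
  finally have "card ?A \<le> card (UNIV::'a set) ^ (2*N+1 - card S)" .
  moreover have "card S \<le> 2*N+1" using S card_mono[OF finite_nbhd S] card_nbhd by metis
  ultimately have "card ?A * card (UNIV::'a set) ^ card S \<le> card (UNIV::'a set) ^ (2*N+1 - card S) * card (UNIV::'a set) ^ card S"
    by simp
  also have "\<dots> = card (UNIV::'a set) ^ (2*N+1)"
    using \<open>card S \<le> 2*N+1\<close> by (simp flip: power_add)
  finally show ?thesis .
qed

lemma pat_out: "w \<in> patterns N \<Longrightarrow> k \<notin> nbhd N \<Longrightarrow> w k = undefined"
  unfolding patterns_def by (rule PiE_arb)

lemma card_merge:
  fixes c d :: "(int \<Rightarrow> 'a::finite) \<Rightarrow> (int \<Rightarrow> 'a)"
  assumes c: "loc c r" and d: "loc d r" and rN: "r \<le> N"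
  shows "card (disagree c d r) * card (UNIV::'a set) ^ (2*N - 2*r) \<le> card (disagree c d N)"
proof -
  let ?B = "PiE (nbhd N - nbhd r) (\<lambda>_. UNIV :: 'a set)"
  let ?m = "\<lambda>(w::int\<Rightarrow>'a, v::int\<Rightarrow>'a). (\<lambda>k. if k \<in> nbhd r then w k else v k)"
  have inj: "inj_on ?m (disagree c d r \<times> ?B)"
  proof (rule inj_onI)
    fix z1 z2 assume z1: "z1 \<in> disagree c d r \<times> ?B" and z2: "z2 \<in> disagree c d r \<times> ?B"
      and eq: "?m z1 = ?m z2"
    obtain w1 v1 where zz1: "z1 = (w1, v1)" by (cases z1)
    obtain w2 v2 where zz2: "z2 = (w2, v2)" by (cases z2)
    have w1: "w1 \<in> patterns r" and w2: "w2 \<in> patterns r" using z1 z2 zz1 zz2 unfolding disagree_def by auto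
    have v1: "v1 \<in> ?B" and v2: "v2 \<in> ?B" using z1 z2 zz1 zz2 by auto
    have eq': "\<And>k. (if k \<in> nbhd r then w1 k else v1 k) = (if k \<in> nbhd r then w2 k else v2 k)"
      using eq zz1 zz2 by (simp add: fun_eq_iff)
    have "w1 = w2"
    proof
      fix k show "w1 k = w2 k"
      proof (cases "k \<in> nbhd r")
        case True then show ?thesis using eq'[of k] by simp
      next
        case False then show ?thesis using pat_out[OF w1 False] pat_out[OF w2 False] by simp
      qed
    qed
    moreover have "v1 = v2"
    proof
      fix k show "v1 k = v2 k"
      proof (cases "k \<in> nbhd r")
        case True
        then have "k \<notin> nbhd N - nbhd r" by simp
        then show ?thesis using PiE_arb[OF v1] PiE_arb[OF v2] by simp
      next
        case False then show ?thesis using eq'[of k] by simp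
      qed
    qed
    ultimately show "z1 = z2" using zz1 zz2 by simp
  qed
  have img: "?m ` (disagree c d r \<times> ?B) \<subseteq> disagree c d N"
  proof (rule image_subsetI)
    fix z assume z: "z \<in> disagree c d r \<times> ?B"
    obtain w v where zz: "z = (w, v)" by (cases z)
    have w: "w \<in> disagree c d r" and v: "v \<in> ?B" using z zz by auto
    have wp: "w \<in> patterns r" using w unfolding disagree_def by simp
    let ?x = "\<lambda>k. if k \<in> nbhd r then w k else v k"
    have "?x \<in> patterns N" unfolding patterns_def
    proof (rule PiE_I)
      fix k assume "k \<notin> nbhd N"
      then have "k \<notin> nbhd r" "k \<notin> nbhd N - nbhd r" using nbhd_mono[OF rN] by auto
      then show "?x k = undefined" using PiE_arb[OF v] by simp
    qed simp
    moreover have "c ?x 0 = c w 0" by (rule loc_local[OF c]) simp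
    moreover have "d ?x 0 = d w 0" by (rule loc_local[OF d]) simp
    ultimately show "?m z \<in> disagree c d N" using w zz unfolding disagree_def by simp
  qed
  have fin: "finite (disagree c d N)" by (rule finite_subset[OF _ finite_patterns]) (auto simp: disagree_def)
  have "card (disagree c d r \<times> ?B) \<le> card (disagree c d N)"
    using card_inj_on_le[OF inj img fin] .
  moreover have "card ?B = card (UNIV::'a set) ^ (2*N - 2*r)"
  proof -
    have "card ?B = card (UNIV::'a set) ^ card (nbhd N - nbhd r)" by (simp add: card_PiE)
    moreover have "card (nbhd N - nbhd r) = 2*N - 2*r"
      using nbhd_mono[OF rN] by (simp add: card_Diff_subset card_nbhd)
    ultimately show ?thesis by simp
  qed
  ultimately show ?thesis by (simp add: card_cartesian_product)
qed

lemma delta_bound: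
  fixes c d :: "(int \<Rightarrow> 'a::finite) \<Rightarrow> (int \<Rightarrow> 'a)" and p :: "int \<Rightarrow> 'a"
  assumes c: "loc c rc" and d: "loc d rd" and N: "max rc rd \<le> N"
    and I: "finite I" and sub: "\<forall>i\<in>I. \<forall>m\<in>S. i+m \<in> nbhd N" and S: "finite S"
    and cont: "\<forall>w\<in>patterns N. c w 0 \<noteq> d w 0 \<longrightarrow> (\<exists>i\<in>I. \<forall>m\<in>S. w (i+m) = p m)"
  shows "delta c d \<le> real (card I) / real (card (UNIV::'a set)) ^ card S"
proof -
  let ?q = "card (UNIV::'a set)"
  define r0 where "r0 = common_radius c d"
  have r0: "loc c r0" "loc d r0" "r0 \<le> N" using common_radius_loc[OF c d] N unfolding r0_def by auto
  have sub1: "disagree c d N \<subseteq> (\<Union>i\<in>I. {w \<in> (patterns N :: (int \<Rightarrow> 'a) set). \<forall>k\<in>(\<lambda>m. i+m) ` S. w k = p (k - i)})"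
    using cont unfolding disagree_def by fastforce
  have each: "card {w \<in> (patterns N :: (int \<Rightarrow> 'a) set). \<forall>k\<in>(\<lambda>m. i+m) ` S. w k = p (k - i)} * ?q ^ card S \<le> ?q ^ (2*N+1)"
    if i: "i \<in> I" for i
  proof -
    have "card ((\<lambda>m. i+m) ` S) = card S" by (simp add: card_image)
    moreover have "(\<lambda>m. i+m) ` S \<subseteq> nbhd N" using sub i by auto
    ultimately show ?thesis using card_fix[of "(\<lambda>m. i+m) ` S" N "\<lambda>k. p (k - i)"] by simp
  qed
  have "card (disagree c d N) \<le> card (\<Union>i\<in>I. {w \<in> (patterns N :: (int \<Rightarrow> 'a) set). \<forall>k\<in>(\<lambda>m. i+m) ` S. w k = p (k - i)})"
    by (rule card_mono[OF _ sub1]) (use I in auto)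
  also have "\<dots> \<le> (\<Sum>i\<in>I. card {w \<in> (patterns N :: (int \<Rightarrow> 'a) set). \<forall>k\<in>(\<lambda>m. i+m) ` S. w k = p (k - i)})"
    by (rule card_UN_le[OF I])
  finally have "card (disagree c d N) * ?q ^ card S \<le> (\<Sum>i\<in>I. card {w \<in> (patterns N :: (int \<Rightarrow> 'a) set). \<forall>k\<in>(\<lambda>m. i+m) ` S. w k = p (k - i)}) * ?q ^ card S"
    by simp
  also have "\<dots> = (\<Sum>i\<in>I. card {w \<in> (patterns N :: (int \<Rightarrow> 'a) set). \<forall>k\<in>(\<lambda>m. i+m) ` S. w k = p (k - i)} * ?q ^ card S)"
    by (simp add: sum_distrib_right)
  also have "\<dots> \<le> (\<Sum>i\<in>I. ?q ^ (2*N+1))"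
    by (rule sum_mono) (use each in auto)
  finally have A: "card (disagree c d N) * ?q ^ card S \<le> card I * ?q ^ (2*N+1)" by simp
  have B: "card (disagree c d r0) * ?q ^ (2*N - 2*r0) \<le> card (disagree c d N)"
    by (rule card_merge[OF r0])
  have D: "card (disagree c d r0) * ?q ^ card S * ?q ^ (2*N - 2*r0) \<le> card I * ?q ^ (2*r0+1) * ?q ^ (2*N - 2*r0)"
  proof -
    have "card (disagree c d r0) * ?q ^ card S * ?q ^ (2*N - 2*r0) \<le> card (disagree c d N) * ?q ^ card S"
      using B by (simp add: mult.commute mult.left_commute)
    also have "\<dots> \<le> card I * ?q ^ (2*N+1)" using A .
    also have "?q ^ (2*N+1) = ?q ^ (2*r0+1) * ?q ^ (2*N - 2*r0)"
      using r0(3) by (simp flip: power_add)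
    finally show ?thesis by (simp add: mult.assoc)
  qed
  have C: "card (disagree c d r0) * ?q ^ card S \<le> card I * ?q ^ (2*r0+1)"
  proof -
    have "0 < card (UNIV::'a set) ^ (2*N - 2*r0)" by (simp add: card_gt_0_iff)
    then show ?thesis by (rule mult_right_le_imp_le[OF D])
  qed
  have qpos: "(0::real) < real ?q" by (simp add: card_gt_0_iff)
  have E: "real (card (disagree c d r0)) * real ?q ^ card S \<le> real (card I) * real ?q ^ (2*r0+1)"
    using C by (metis of_nat_le_iff of_nat_mult of_nat_power)
  have "real (card (disagree c d r0)) / real ?q ^ (2*r0+1) \<le> real (card I) / real ?q ^ card S"
  proof -
    have p1: "(0::real) < real ?q ^ (2*r0+1)" "(0::real) < real ?q ^ card S" using qpos by simp_all
    have "real (card (disagree c d r0)) \<le> real (card I) / real ?q ^ card S * real ?q ^ (2*r0+1)"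
      using p1 E by (simp add: pos_le_divide_eq mult.commute)
    then show ?thesis using p1 by (simp add: pos_divide_le_eq)
  qed
  moreover have "delta c d = real (card (disagree c d r0)) / real ?q ^ (2*r0+1)"
    unfolding delta_def r0_def Let_def by (rule refl)
  ultimately show ?thesis by linarith
qed



locale flip =
  fixes rc n :: nat and a0 a1 :: 'a and u u' :: "int \<Rightarrow> 'a"
  assumes n_big: "3*rc + 2 \<le> n" and a01: "a0 \<noteq> a1" and uu: "u \<noteq> u'"
    and up: "u \<in> patterns rc" and up': "u' \<in> patterns rc"
begin

definition M :: "int set" where "M = nbhd n - nbhd rc"
definition p :: "int \<Rightarrow> 'a" where "p m = (if m < 0 \<or> m = int n then a1 else a0)"
definition mark :: "(int \<Rightarrow> 'a) \<Rightarrow> int \<Rightarrow> bool" where "mark x t \<longleftrightarrow> (\<forall>m\<in>M. x (t+m) = p m)"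
definition blk :: "(int \<Rightarrow> 'a) \<Rightarrow> int \<Rightarrow> (int \<Rightarrow> 'a)" where "blk x t = restrict (\<lambda>j. x (t+j)) (nbhd rc)"
definition Cf :: "(int \<Rightarrow> 'a) \<Rightarrow> int \<Rightarrow> bool" where "Cf x t \<longleftrightarrow> mark x t \<and> (blk x t = u \<or> blk x t = u')"
definition sw :: "(int \<Rightarrow> 'a) \<Rightarrow> (int \<Rightarrow> 'a)" where "sw v = (if v = u then u' else u)"
definition Gloc :: "(int \<Rightarrow> 'a) \<Rightarrow> 'a" where
  "Gloc y = (if \<exists>i\<in>nbhd rc. Cf y i then sw (blk y (SOME i. i \<in> nbhd rc \<and> Cf y i)) (- (SOME i. i \<in> nbhd rc \<and> Cf y i)) else y 0)"
definition g :: "(int \<Rightarrow> 'a) \<Rightarrow> (int \<Rightarrow> 'a)" where "g x l = Gloc (\<lambda>j. x (l+j))"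

lemma memM: "m \<in> M \<longleftrightarrow> (- int n \<le> m \<and> m \<le> int n \<and> \<not> (- int rc \<le> m \<and> m \<le> int rc))"
  unfolding M_def nbhd_def by auto

lemma mem_nbhd: "m \<in> nbhd r \<longleftrightarrow> \<bar>m\<bar> \<le> int r"
  unfolding nbhd_def by auto

lemma clash_witness:
  assumes "\<delta> \<noteq> 0" "\<bar>\<delta>\<bar> \<le> int n + int rc"
  shows "\<exists>m\<in>M. m+\<delta> \<in> M \<and> p m \<noteq> p (m+\<delta>)"
proof -
  have nb: "3*int rc + 2 \<le> int n" using n_big by linarith
  consider (A) "0 < \<delta>" "\<delta> \<le> int n - int rc - 1" | (B) "0 < \<delta>" "int n - int rc \<le> \<delta>"
    | (C) "\<delta> < 0" "- (int n - int rc - 1) \<le> \<delta>" | (D) "\<delta> < 0" "\<delta> \<le> - (int n - int rc)"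
    using assms by linarith
  then show ?thesis
  proof cases
    case A
    show ?thesis
      by (rule bexI[where x="int n - \<delta>"]) (use A nb assms a01 in \<open>auto simp: memM p_def\<close>)
  next
    case B
    show ?thesis
      by (rule bexI[where x="- int rc - 1"]) (use B nb assms a01 in \<open>auto simp: memM p_def\<close>)
  next
    case C
    show ?thesis
      by (rule bexI[where x="int n"]) (use C nb assms a01 in \<open>auto simp: memM p_def\<close>)
  next
    case D
    show ?thesis
      by (rule bexI[where x="int rc + 1"]) (use D nb assms a01 in \<open>auto simp: memM p_def\<close>)
  qed
qed

lemma mark_unique:
  assumes "mark x t" "mark x t'" "\<bar>t - t'\<bar> \<le> int n + int rc"
  shows "t = t'"
proof (rule ccontr)
  assume "t \<noteq> t'"
  then obtain m where m: "m \<in> M" "m + (t - t') \<in> M" "p m \<noteq> p (m + (t - t'))"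
    using clash_witness[of "t - t'"] assms(3) by auto
  have "x (t + m) = p m" using assms(1) m(1) unfolding mark_def by blast
  moreover have "x (t' + (m + (t - t'))) = p (m + (t - t'))" using assms(2) m(2) unfolding mark_def by blast
  moreover have "t' + (m + (t - t')) = t + m" by simp
  ultimately show False using m(3) by simp
qed

lemma Cf_shift: "Cf (\<lambda>j. x (l+j)) i = Cf x (l+i)"
  unfolding Cf_def mark_def blk_def by (simp add: add.assoc)

lemma blk_shift: "blk (\<lambda>j. x (l+j)) i = blk x (l+i)"
  unfolding blk_def by (simp add: add.assoc)

lemma M_bound: "m \<in> M \<Longrightarrow> int rc < \<bar>m\<bar> \<and> \<bar>m\<bar> \<le> int n"
  unfolding memM by auto

lemma g_in:
  assumes C: "Cf x t" and lt: "\<bar>l - t\<bar> \<le> int rc"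
  shows "g x l = sw (blk x t) (l - t)"
proof -
  let ?y = "\<lambda>j. x (l+j)"
  have ex: "\<exists>i. i \<in> nbhd rc \<and> Cf ?y i"
    by (rule exI[where x="t - l"]) (use C lt in \<open>auto simp: Cf_shift mem_nbhd\<close>)
  define i0 where "i0 = (SOME i. i \<in> nbhd rc \<and> Cf ?y i)"
  have i0: "i0 \<in> nbhd rc \<and> Cf ?y i0" unfolding i0_def by (rule someI_ex[OF ex])
  then have "Cf x (l + i0)" by (simp add: Cf_shift)
  then have "l + i0 = t"
    using C i0 lt n_big by (intro mark_unique[of x]) (auto simp: Cf_def mem_nbhd)
  then have e: "- i0 = l - t" "l + i0 = t" by simp_all
  have ex2: "\<exists>i\<in>nbhd rc. Cf ?y i" using ex by blast
  have h: "g x l = sw (blk x (l + i0)) (- i0)"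
    using ex2 unfolding g_def Gloc_def i0_def[symmetric] by (simp add: blk_shift)
  show ?thesis using h unfolding e(2) e(1) .
qed

lemma g_out:
  assumes "\<not> (\<exists>t. \<bar>l - t\<bar> \<le> int rc \<and> Cf x t)"
  shows "g x l = x l"
proof -
  have "\<not> (\<exists>i\<in>nbhd rc. Cf (\<lambda>j. x (l+j)) i)"
  proof
    assume "\<exists>i\<in>nbhd rc. Cf (\<lambda>j. x (l+j)) i"
    then obtain i where "i \<in> nbhd rc" "Cf x (l+i)" by (auto simp: Cf_shift)
    then show False using assms by (auto simp: mem_nbhd)
  qed
  then show ?thesis unfolding g_def Gloc_def by simp
qed

lemma sw_mem: "sw v = u \<or> sw v = u'" unfolding sw_def by auto

lemma sw_sw: "v = u \<or> v = u' \<Longrightarrow> sw (sw v) = v"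
  unfolding sw_def using uu by auto

lemma sw_pat: "sw v \<in> patterns rc" using sw_mem up up' by metis

lemma g_mark:
  assumes C: "Cf x t" and m: "m \<in> M"
  shows "g x (t+m) = x (t+m)"
proof (rule g_out, rule notI)
  assume "\<exists>t'. \<bar>t + m - t'\<bar> \<le> int rc \<and> Cf x t'"
  then obtain t' where t': "\<bar>t + m - t'\<bar> \<le> int rc" "Cf x t'" by blast
  have "\<bar>t - t'\<bar> \<le> int n + int rc" using t'(1) M_bound[OF m] by linarith
  then have "t = t'" using C t'(2) by (intro mark_unique[of x]) (auto simp: Cf_def)
  then show False using t'(1) M_bound[OF m] by linarith
qed

lemma g_blk:
  assumes C: "Cf x t"
  shows "blk (g x) t = sw (blk x t)"
proof
  fix j show "blk (g x) t j = sw (blk x t) j"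
  proof (cases "j \<in> nbhd rc")
    case True
    then have "g x (t+j) = sw (blk x t) (t + j - t)" by (intro g_in[OF C]) (simp add: mem_nbhd)
    then show ?thesis using True unfolding blk_def by simp
  next
    case False
    then show ?thesis unfolding blk_def using pat_out[OF sw_pat False] by simp
  qed
qed

lemma Cf_g: "Cf x t \<Longrightarrow> Cf (g x) t"
  using g_mark g_blk sw_mem unfolding Cf_def mark_def by metis

lemma Cf_g_rev:
  assumes C: "Cf (g x) t"
  shows "Cf x t"
proof (rule ccontr)
  assume nC: "\<not> Cf x t"
  have unch: "g x l = x l" if "\<bar>l - t\<bar> \<le> int n" for l
  proof (rule ccontr)
    assume "g x l \<noteq> x l"
    then obtain t' where t': "\<bar>l - t'\<bar> \<le> int rc" "Cf x t'" using g_out by blast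
    have "Cf (g x) t'" using Cf_g[OF t'(2)] .
    then have "t = t'" using C that t'(1) by (intro mark_unique[of "g x"]) (auto simp: Cf_def)
    then show False using nC t'(2) by simp
  qed
  have "mark x t" unfolding mark_def
  proof (intro ballI)
    fix m assume m: "m \<in> M"
    have "g x (t+m) = p m" using C m unfolding Cf_def mark_def by blast
    moreover have "g x (t+m) = x (t+m)" using unch[of "t+m"] M_bound[OF m] by simp
    ultimately show "x (t+m) = p m" by simp
  qed
  moreover have "blk x t = blk (g x) t"
    unfolding blk_def by (rule restrict_ext) (use unch n_big in \<open>auto simp: mem_nbhd\<close>)
  ultimately show False using nC C unfolding Cf_def by simp
qed

lemma g_g: "g (g x) = x"
proof
  fix l
  show "g (g x) l = x l"
  proof (cases "\<exists>t. \<bar>l - t\<bar> \<le> int rc \<and> Cf x t")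
    case True
    then obtain t where t: "\<bar>l - t\<bar> \<le> int rc" "Cf x t" by blast
    have "g (g x) l = sw (blk (g x) t) (l - t)" by (rule g_in[OF Cf_g[OF t(2)] t(1)])
    also have "\<dots> = blk x t (l - t)" using g_blk[OF t(2)] sw_sw t(2) unfolding Cf_def by simp
    also have "\<dots> = x l" unfolding blk_def using t(1) by (simp add: mem_nbhd)
    finally show ?thesis .
  next
    case False
    then have "\<not> (\<exists>t. \<bar>l - t\<bar> \<le> int rc \<and> Cf (g x) t)" using Cf_g_rev by blast
    then have "g (g x) l = g x l" by (rule g_out)
    also have "\<dots> = x l" using False by (rule g_out)
    finally show ?thesis .
  qed
qed

lemma loc_g: "loc g (n + rc)"
  unfolding loc_def
proof (intro conjI allI impI)
  fix x i show "g x i = g (\<lambda>j. x (i + j)) 0" unfolding g_def by simp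
next
  fix x x' :: "int \<Rightarrow> 'a" assume A: "\<forall>j\<in>nbhd (n + rc). x j = x' j"
  have eqC: "Cf x i = Cf x' i \<and> blk x i = blk x' i" if i: "i \<in> nbhd rc" for i
  proof -
    have "\<forall>m\<in>M. x (i+m) = x' (i+m)"
    proof
      fix m assume m: "m \<in> M"
      have "\<bar>i+m\<bar> \<le> int (n+rc)" using M_bound[OF m] i abs_triangle_ineq[of i m] by (simp add: mem_nbhd)
      then show "x (i+m) = x' (i+m)" using A by (simp add: mem_nbhd)
    qed
    then have "mark x i = mark x' i" unfolding mark_def by simp
    moreover have "blk x i = blk x' i" unfolding blk_def
    proof (rule restrict_ext)
      fix j assume j: "j \<in> nbhd rc"
      have "\<bar>i\<bar> \<le> int rc" "\<bar>j\<bar> \<le> int rc" using i j by (simp_all add: mem_nbhd)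
      then have "\<bar>i+j\<bar> \<le> int (n+rc)" using abs_triangle_ineq[of i j] n_big by linarith
      then show "x (i+j) = x' (i+j)" using A by (simp add: mem_nbhd)
    qed
    ultimately show ?thesis unfolding Cf_def by simp
  qed
  have P: "(\<lambda>i. i \<in> nbhd rc \<and> Cf x i) = (\<lambda>i. i \<in> nbhd rc \<and> Cf x' i)"
    using eqC by auto
  have x0: "x 0 = x' 0" using A by (auto simp: mem_nbhd)
  have "Gloc x = Gloc x'"
  proof (cases "\<exists>i\<in>nbhd rc. Cf x i")
    case True
    define i0 where "i0 = (SOME i. i \<in> nbhd rc \<and> Cf x i)"
    have i0: "i0 \<in> nbhd rc" unfolding i0_def using someI_ex[of "\<lambda>i. i \<in> nbhd rc \<and> Cf x i"] True by blast
    have True': "\<exists>i\<in>nbhd rc. Cf x' i" using True eqC by blast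
    have "i0 = (SOME i. i \<in> nbhd rc \<and> Cf x' i)" unfolding i0_def P ..
    then show ?thesis unfolding Gloc_def using True True' eqC[OF i0] i0_def by simp
  next
    case False
    then have "\<not> (\<exists>i\<in>nbhd rc. Cf x' i)" using eqC by blast
    then show ?thesis unfolding Gloc_def using False x0 by simp
  qed
  then show "g x 0 = g x' 0" unfolding g_def by simp
qed

lemma exists_Cf: "\<exists>x. Cf x 0 \<and> blk x 0 = u"
proof -
  define x where "x = (\<lambda>j. if j \<in> nbhd rc then u j else p j)"
  have "blk x 0 = u"
  proof
    fix j show "blk x 0 j = u j"
      unfolding blk_def x_def using pat_out[OF up, of j] by auto
  qed
  moreover have "mark x 0" unfolding mark_def x_def M_def by auto
  ultimately show ?thesis unfolding Cf_def by blast
qed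

lemma card_M: "card M = 2*n - 2*rc"
proof -
  have "nbhd rc \<subseteq> nbhd n" using n_big by (intro nbhd_mono) simp
  then show ?thesis unfolding M_def by (simp add: card_Diff_subset card_nbhd)
qed

lemma finite_M: "finite M" unfolding M_def by simp

lemma disagree_cont:
  assumes c: "loc c rc" and ne: "c (g w) 0 \<noteq> c w 0"
  shows "\<exists>t\<in>nbhd (2*rc). mark w t"
proof (rule ccontr)
  assume nt: "\<not> (\<exists>t\<in>nbhd (2*rc). mark w t)"
  have "g w j = w j" if "j \<in> nbhd rc" for j
  proof (rule g_out, rule notI)
    assume "\<exists>t. \<bar>j - t\<bar> \<le> int rc \<and> Cf w t"
    then obtain t where "\<bar>j - t\<bar> \<le> int rc" "Cf w t" by blast
    then show False using nt that by (auto simp: mem_nbhd Cf_def)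
  qed
  then have "c (g w) 0 = c w 0" by (rule loc_local[OF c])
  then show False using ne by simp
qed

end



lemma two_elems:
  assumes "card (UNIV :: 'a::finite set) \<ge> 2"
  shows "\<exists>v'::'a. v' \<noteq> v"
proof (rule ccontr)
  assume "\<not> (\<exists>v'::'a. v' \<noteq> v)"
  then have "(UNIV :: 'a set) = {v}" by auto
  then have "card (UNIV :: 'a set) = card {v}" by (rule arg_cong)
  then show False using assms by simp
qed

lemma small:
  fixes A e :: real and q :: nat
  assumes A: "0 \<le> A" and e: "0 < e" and q: "2 \<le> q"
  shows "\<exists>k. \<forall>s\<ge>k. A / real q ^ s < e"
proof -
  obtain k :: nat where k: "A / e < real k" using reals_Archimedean2 by blast
  have "A / real q ^ s < e" if s: "k \<le> s" for s
  proof -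
    have "real s < real (2^s)" by (simp only: of_nat_less_iff less_exp)
    also have "real (2^s) \<le> real (q^s)" using q by (simp only: of_nat_le_iff power_mono) 
    finally have "real k < real q ^ s" using s by simp
    then have "A / e < real q ^ s" using k by linarith
    then have "A < e * real q ^ s" using e by (simp add: pos_divide_less_eq mult.commute)
    moreover have "0 < real q ^ s" using q by simp
    ultimately show ?thesis by (simp add: pos_divide_less_eq mult.commute)
  qed
  then show ?thesis by blast
qed

lemma const_pat:
  fixes c :: "(int \<Rightarrow> 'a) \<Rightarrow> (int \<Rightarrow> 'a)"
  assumes c: "loc c rc" and h: "\<forall>u\<in>patterns rc. \<forall>u'\<in>patterns rc. c u 0 = c u' 0"
  shows "\<exists>v. \<forall>x. c x = (\<lambda>_. v)"
proof -
  have und: "(\<lambda>_. undefined) \<in> patterns rc" unfolding patterns_def PiE_def extensional_def by simp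
  have "c x = (\<lambda>_. c (\<lambda>_. undefined) 0)" for x
  proof
    fix i
    have "c x i = c (\<lambda>j. x (i+j)) 0" by (rule loc_shift[OF c])
    also have "\<dots> = c (restrict (\<lambda>j. x (i+j)) (nbhd rc)) 0" by (rule loc_local[OF c]) simp
    also have "\<dots> = c (\<lambda>_. undefined) 0"
    proof -
      have "restrict (\<lambda>j. x (i+j)) (nbhd rc) \<in> patterns rc"
        unfolding patterns_def by (rule restrict_PiE_iff[THEN iffD2]) simp
      then show ?thesis using h und by blast
    qed
    finally show "c x i = c (\<lambda>_. undefined) 0" .
  qed
  then show ?thesis by blast
qed

lemma perturb_flip:
  fixes c :: "(int \<Rightarrow> 'a::finite) \<Rightarrow> (int \<Rightarrow> 'a)"
  assumes card2: "card (UNIV :: 'a set) \<ge> 2" and c: "loc c rc"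
    and u: "u \<in> patterns rc" and u': "u' \<in> patterns rc" and neq: "c u 0 \<noteq> c u' 0" and e: "0 < \<epsilon>"
  shows "\<exists>g. (\<forall>x. g (g x) = x) \<and> c \<circ> g \<in> CA \<and> c \<circ> g \<noteq> c \<and> delta c (c \<circ> g) < \<epsilon>"
proof -
  obtain a0 :: 'a where True by blast
  obtain a1 where a01: "a1 \<noteq> a0" using two_elems[OF card2] by blast
  obtain k where k: "\<forall>s\<ge>k. real (4*rc+1) / real (card (UNIV::'a set)) ^ s < \<epsilon>"
    using small[OF _ e card2, of "real (4*rc+1)"] by auto
  define n where "n = 3*rc + 2 + k"
  have uu: "u \<noteq> u'" using neq by blast
  interpret F: flip rc n a0 a1 u u'
    by unfold_locales (use n_def a01 uu u u' in auto)
  let ?g = F.g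
  have gg: "\<forall>x. ?g (?g x) = x" using F.g_g by blast
  have ld: "loc (c \<circ> ?g) (rc + (n + rc))" by (rule loc_comp[OF c F.loc_g])
  then have inCA: "c \<circ> ?g \<in> CA" using CA_loc by blast
  obtain x where x: "F.Cf x 0" "F.blk x 0 = u" using F.exists_Cf by blast
  have "c (?g x) 0 = c u' 0"
  proof (rule loc_local[OF c])
    fix j assume j: "j \<in> nbhd rc"
    have "?g x j = F.sw (F.blk x 0) (j - 0)" by (rule F.g_in[OF x(1)]) (use j in \<open>simp add: F.mem_nbhd\<close>)
    then show "?g x j = u' j" using x(2) by (simp add: F.sw_def)
  qed
  moreover have "c x 0 = c u 0"
  proof (rule loc_local[OF c])
    fix j assume j: "j \<in> nbhd rc"
    have "F.blk x 0 j = x j" using j unfolding F.blk_def by simp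
    then show "x j = u j" using x(2) by simp
  qed
  ultimately have ne: "c \<circ> ?g \<noteq> c" using neq by (metis comp_apply)
  have db: "delta c (c \<circ> ?g) \<le> real (card (nbhd (2*rc))) / real (card (UNIV::'a set)) ^ card F.M"
  proof (rule delta_bound[OF c ld, of "n + 2*rc" "nbhd (2*rc)" F.M F.p])
    show "max rc (rc + (n + rc)) \<le> n + 2*rc" by simp
    show "finite (nbhd (2*rc))" by simp
    show "finite F.M" by (rule F.finite_M)
    show "\<forall>i\<in>nbhd (2 * rc). \<forall>m\<in>F.M. i + m \<in> nbhd (n + 2 * rc)"
    proof (intro ballI)
      fix i m assume i: "i \<in> nbhd (2*rc)" and m: "m \<in> F.M"
      have "\<bar>i\<bar> \<le> int (2*rc)" using i by (simp add: F.mem_nbhd)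
      moreover have "\<bar>m\<bar> \<le> int n" using F.M_bound[OF m] by simp
      ultimately have "\<bar>i+m\<bar> \<le> int (n + 2*rc)" using abs_triangle_ineq[of i m] by linarith
      then show "i + m \<in> nbhd (n + 2*rc)" by (simp add: F.mem_nbhd)
    qed
    show "\<forall>w\<in>patterns (n + 2 * rc). c w 0 \<noteq> (c \<circ> F.g) w 0 \<longrightarrow> (\<exists>i\<in>nbhd (2 * rc). \<forall>m\<in>F.M. w (i + m) = F.p m)"
    proof (intro ballI impI)
      fix w assume "c w 0 \<noteq> (c \<circ> F.g) w 0"
      then have "c (?g w) 0 \<noteq> c w 0" by simp
      then show "\<exists>i\<in>nbhd (2 * rc). \<forall>m\<in>F.M. w (i + m) = F.p m"
        using F.disagree_cont[OF c] unfolding F.mark_def by blast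
    qed
  qed
  have "card F.M \<ge> k" using F.card_M n_def by simp
  then have "real (card (nbhd (2*rc))) / real (card (UNIV::'a set)) ^ card F.M < \<epsilon>"
    using k card_nbhd[of "2*rc"] by simp
  with db have "delta c (c \<circ> ?g) < \<epsilon>" by linarith
  then show ?thesis using gg inCA ne by blast
qed

lemma perturb_CA:
  fixes c :: "(int \<Rightarrow> 'a::finite) \<Rightarrow> (int \<Rightarrow> 'a)"
  assumes card2: "card (UNIV :: 'a set) \<ge> 2" and c: "loc c rc" and e: "0 < \<epsilon>"
  shows "\<exists>d\<in>CA. d \<noteq> c \<and> delta c d < \<epsilon>"
proof -
  obtain a0 :: 'a where True by blast
  define oth :: "'a \<Rightarrow> 'a" where "oth v = (SOME v'. v' \<noteq> v)" for v
  have oth: "oth v \<noteq> v" for v unfolding oth_def using someI_ex[OF two_elems[OF card2, of v]] .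
  obtain k where k: "\<forall>s\<ge>k. real 1 / real (card (UNIV::'a set)) ^ s < \<epsilon>"
    using small[OF _ e card2, of "real 1"] by auto
  define n where "n = rc + k"
  define d where "d x i = (if \<forall>j\<in>nbhd n. x (i+j) = a0 then oth (c x i) else c x i)" for x i
  have ld: "loc d n" unfolding loc_def
  proof (intro conjI allI impI)
    fix x i show "d x i = d (\<lambda>j. x (i + j)) 0"
      unfolding d_def using loc_shift[OF c, of x i] by simp
  next
    fix x x' :: "int \<Rightarrow> 'a" assume A: "\<forall>j\<in>nbhd n. x j = x' j"
    have "c x 0 = c x' 0"
      by (rule loc_local[OF loc_mono[OF c, of n]]) (use A n_def in auto)
    moreover have "(\<forall>j\<in>nbhd n. x (0+j) = a0) = (\<forall>j\<in>nbhd n. x' (0+j) = a0)" using A by simp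
    ultimately show "d x 0 = d x' 0" unfolding d_def by simp
  qed
  then have inCA: "d \<in> CA" using CA_loc by blast
  have "d (\<lambda>_. a0) 0 \<noteq> c (\<lambda>_. a0) 0" unfolding d_def using oth by simp
  then have ne: "d \<noteq> c" by metis
  have db: "delta c d \<le> real (card {0::int}) / real (card (UNIV::'a set)) ^ card (nbhd n)"
  proof (rule delta_bound[OF c ld, of n "{0}" "nbhd n" "\<lambda>_. a0"])
    show "max rc n \<le> n" using n_def by simp
    show "\<forall>w\<in>patterns n. c w 0 \<noteq> d w 0 \<longrightarrow> (\<exists>i\<in>{0}. \<forall>m\<in>nbhd n. w (i + m) = a0)"
    proof (intro ballI impI)
      fix w assume "c w 0 \<noteq> d w 0"
      then have "\<forall>j\<in>nbhd n. w j = a0" unfolding d_def by (cases "\<forall>j\<in>nbhd n. w j = a0") simp_all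
      then show "\<exists>i\<in>{0}. \<forall>m\<in>nbhd n. w (i + m) = a0" by simp
    qed
    show "finite {0::int}" by simp
    show "finite (nbhd n)" by simp
    show "\<forall>i\<in>{0}. \<forall>m\<in>nbhd n. i + m \<in> nbhd n" by simp
  qed
  have "card (nbhd n) \<ge> k" using card_nbhd[of n] n_def by simp
  then have "real (card {0::int}) / real (card (UNIV::'a set)) ^ card (nbhd n) < \<epsilon>"
    using k by simp
  with db have "delta c d < \<epsilon>" by linarith
  then show ?thesis using inCA ne by blast
qed

theorem mainTheorem7:
  assumes "card (UNIV :: 'a::finite set) \<ge> 2"
  shows "perfect_delta (CA :: ((int \<Rightarrow> 'a) \<Rightarrow> (int \<Rightarrow> 'a)) set)
       \<and> perfect_delta (SUR :: ((int \<Rightarrow> 'a) \<Rightarrow> (int \<Rightarrow> 'a)) set)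
       \<and> perfect_delta (REV :: ((int \<Rightarrow> 'a) \<Rightarrow> (int \<Rightarrow> 'a)) set)"
proof -
  have nonconst: "\<exists>u\<in>patterns rc. \<exists>u'\<in>patterns rc. c u 0 \<noteq> c u' 0"
    if c: "loc c rc" and nc: "\<not> (\<exists>v. \<forall>x. c x = (\<lambda>_. v))" for c :: "(int \<Rightarrow> 'a) \<Rightarrow> (int \<Rightarrow> 'a)" and rc
    using const_pat[OF c] nc by blast
  have P1: "perfect_delta (CA :: ((int \<Rightarrow> 'a) \<Rightarrow> (int \<Rightarrow> 'a)) set)"
    unfolding perfect_delta_def
  proof (intro ballI allI impI)
    fix c :: "(int \<Rightarrow> 'a) \<Rightarrow> (int \<Rightarrow> 'a)" and \<epsilon> :: real
    assume "c \<in> CA" "0 < \<epsilon>"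
    then obtain rc where "loc c rc" using CA_loc by blast
    then show "\<exists>d\<in>CA. d \<noteq> c \<and> delta c d < \<epsilon>" using perturb_CA[OF assms] \<open>0 < \<epsilon>\<close> by blast
  qed
  have P2: "perfect_delta (SUR :: ((int \<Rightarrow> 'a) \<Rightarrow> (int \<Rightarrow> 'a)) set)"
    unfolding perfect_delta_def
  proof (intro ballI allI impI)
    fix c :: "(int \<Rightarrow> 'a) \<Rightarrow> (int \<Rightarrow> 'a)" and \<epsilon> :: real
    assume cS: "c \<in> SUR" and e: "0 < \<epsilon>"
    then obtain rc where c: "loc c rc" using CA_loc unfolding SUR_def by blast
    have sj: "surj c" using cS unfolding SUR_def by blast
    have nc: "\<not> (\<exists>v. \<forall>x. c x = (\<lambda>_. v))"
    proof
      assume "\<exists>v. \<forall>x. c x = (\<lambda>_. v)"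
      then obtain v where v: "\<forall>x. c x = (\<lambda>_. v)" by blast
      obtain a where a: "a \<noteq> v" using two_elems[OF assms] by blast
      obtain x where "c x = (\<lambda>_. a)" using sj by (metis surjD)
      then show False using v a by (metis)
    qed
    obtain u u' where uu: "u \<in> patterns rc" "u' \<in> patterns rc" "c u 0 \<noteq> c u' 0"
      using nonconst[OF c nc] by blast
    obtain g where g: "\<forall>x. g (g x) = x" "c \<circ> g \<in> CA" "c \<circ> g \<noteq> c" "delta c (c \<circ> g) < \<epsilon>"
      using perturb_flip[OF assms c uu e] by blast
    have "surj (c \<circ> g)"
    proof (rule surjI)
      fix y show "(c \<circ> g) (g (inv c y)) = y" using g(1) sj by (simp add: surj_f_inv_f)
    qed
    then show "\<exists>d\<in>SUR. d \<noteq> c \<and> delta c d < \<epsilon>" using g unfolding SUR_def by blast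
  qed
  have P3: "perfect_delta (REV :: ((int \<Rightarrow> 'a) \<Rightarrow> (int \<Rightarrow> 'a)) set)"
    unfolding perfect_delta_def
  proof (intro ballI allI impI)
    fix c :: "(int \<Rightarrow> 'a) \<Rightarrow> (int \<Rightarrow> 'a)" and \<epsilon> :: real
    assume cS: "c \<in> REV" and e: "0 < \<epsilon>"
    then obtain rc where c: "loc c rc" using CA_loc unfolding REV_def by blast
    have ij: "inj c" using cS unfolding REV_def by blast
    have nc: "\<not> (\<exists>v. \<forall>x. c x = (\<lambda>_. v))"
    proof
      assume "\<exists>v. \<forall>x. c x = (\<lambda>_. v)"
      then obtain v where v: "\<forall>x. c x = (\<lambda>_. v)" by blast
      obtain a where a: "a \<noteq> v" using two_elems[OF assms] by blast
      have "c (\<lambda>_. a) = c (\<lambda>_. v)" using v by simp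
      then have "(\<lambda>_::int. a) = (\<lambda>_. v)" using ij by (simp add: inj_eq)
      then show False using a by (metis)
    qed
    obtain u u' where uu: "u \<in> patterns rc" "u' \<in> patterns rc" "c u 0 \<noteq> c u' 0"
      using nonconst[OF c nc] by blast
    obtain g where g: "\<forall>x. g (g x) = x" "c \<circ> g \<in> CA" "c \<circ> g \<noteq> c" "delta c (c \<circ> g) < \<epsilon>"
      using perturb_flip[OF assms c uu e] by blast
    have "inj (c \<circ> g)"
    proof (rule injI)
      fix x y assume "(c \<circ> g) x = (c \<circ> g) y"
      then have "g x = g y" using ij by (simp add: inj_eq)
      then show "x = y" using g(1) by metis
    qed
    then show "\<exists>d\<in>REV. d \<noteq> c \<and> delta c d < \<epsilon>" using g unfolding REV_def by blast
  qed
  show ?thesis using P1 P2 P3 by blast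
qed


end
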